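(* Let $\rho$ be the real number (with $\rho\in(0.6543,0.6632)$) such that \[ \int_0^1\prod_{0\leq k<\lambda}\left|\sin(2^k\pi\theta)\right|\,d\theta\asymp\rho^\lambda \] for all integers $\lambda\geq 0$. Then, uniformly for real $z\geq 1$, \[ \int_0^1\sup_{x\geq 0}\left|\sum_{x<m\leq x+z}(-1)^{s_2(m)}e(m\theta)\right|\,d\theta\ll z^{1+\frac{\log\rho}{\log 2}}. \]
   Context: $s_2(m)$ denotes the sum of the binary digits of the nonnegative integer $m$; $e(x)=e^{2\pi i x}$; the sum ranges over integers $m$ in $(x,x+z]$. The existence of $\rho$ with the stated property and bounds is a known result of Fouvry and Mauduit; $A\asymp B$ means $A\ll B$ and $B\ll A$ with constants independent of $\lambda$, and $\ll$ has an absolute implied constant independent of $z$. *)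

theory Defs
  imports "HOL-Analysis.Analysis"
begin

fun s2 :: "nat \<Rightarrow> nat" where
  "s2 m = (if m = 0 then 0 else m mod 2 + s2 (m div 2))"

definition e :: "real \<Rightarrow> complex" where
  "e x = exp (2 * of_real pi * \<i> * of_real x)"

text \<open>The exponential sum over integers m in (x, x+z] (for x \<ge> 0 these are naturals).\<close>
definition S :: "real \<Rightarrow> real \<Rightarrow> real \<Rightarrow> complex" where
  "S x z \<theta> = (\<Sum>m\<in>{m::nat. x < real m \<and> real m \<le> x + z}. (-1) ^ s2 m * e (real m * \<theta>))"

definition P :: "nat \<Rightarrow> real" where
  "P l = integral {0..1} (\<lambda>\<theta>. \<Prod>k<l. \<bar>sin (2 ^ k * pi * \<theta>)\<bar>)"

end

theory Submission
  imports Defs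
begin

declare s2.simps[simp del]

lemma s2_0: "s2 0 = 0"
  by (subst s2.simps) simp

lemma s2_even: "s2 (2*n) = s2 n"
  by (subst s2.simps) (simp add: s2_0)

lemma s2_odd: "s2 (2*n+1) = Suc (s2 n)"
  by (subst s2.simps) simp

lemma e_add: "e (x + y) = e x * e y"
  unfolding e_def by (simp add: distrib_left exp_add)

lemma norm_e: "norm (e x) = 1"
  unfolding e_def by simp

lemma norm_1_minus_e: "norm (1 - e x) = 2 * \<bar>sin (pi * x)\<bar>"
proof -
  define t where "t = pi * x"
  have ee: "e x = cis (2*t)"
    unfolding e_def t_def cis_conv_exp by (simp add: mult_ac)
  have "(norm (1 - e x))^2 = (1 - cos (2*t))^2 + (sin (2*t))^2"
    unfolding ee by (simp add: cmod_power2)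
  also have "\<dots> = 4 * (sin t)^2"
  proof -
    have h: "(sin (2*t))^2 = 4 * sin t^2 * (1 - sin t^2)"
      unfolding sin_double by (simp add: power_mult_distrib cos_squared_eq)
    show ?thesis unfolding h cos_double_sin by (simp add: power2_eq_square algebra_simps)
  qed
  also have "\<dots> = (2 * \<bar>sin t\<bar>)^2" by (simp add: power2_eq_square)
  finally show ?thesis unfolding t_def
    by (metis abs_of_nonneg norm_ge_zero power2_eq_iff_nonneg zero_le_mult_iff abs_ge_zero zero_le_numeral)
qed

definition V :: "nat \<Rightarrow> nat \<Rightarrow> real \<Rightarrow> complex" where
  "V a b \<theta> = (\<Sum>m\<in>{a..<b}. (-1) ^ s2 m * e (real m * \<theta>))"

lemma V_double: "V (2*a) (2*b) \<theta> = (1 - e \<theta>) * V a b (2*\<theta>)"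
proof (induction b)
  case 0
  then show ?case by (simp add: V_def)
next
  case (Suc b)
  show ?case
  proof (cases "b < a")
    case True
    then show ?thesis by (simp add: V_def)
  next
    case False
    have "V (2*a) (2*Suc b) \<theta> = V (2*a) (2*b) \<theta> + (-1)^s2 (2*b) * e (real (2*b) * \<theta>)
        + (-1)^s2 (2*b+1) * e (real (2*b+1) * \<theta>)"
      using False by (simp add: V_def)
    also have "\<dots> = V (2*a) (2*b) \<theta> + (1 - e \<theta>) * ((-1)^s2 b * e (real b * (2*\<theta>)))"
      unfolding s2_even s2_odd
      by (simp add: algebra_simps e_add[symmetric])
    also have "\<dots> = (1 - e \<theta>) * V a (Suc b) (2*\<theta>)"
      using False Suc by (simp add: V_def algebra_simps)
    finally show ?thesis .
  qed
qed

lemma norm_V_le: "norm (V a b \<theta>) \<le> real (b - a)"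
proof -
  have "norm (V a b \<theta>) \<le> (\<Sum>m\<in>{a..<b}. norm ((-1::complex) ^ s2 m * e (real m * \<theta>)))"
    unfolding V_def by (rule norm_sum)
  also have "\<dots> = real (b - a)" by (simp add: norm_mult norm_e norm_power)
  finally show ?thesis .
qed

definition pp :: "nat \<Rightarrow> real \<Rightarrow> real" where
  "pp l \<theta> = (\<Prod>k<l. \<bar>sin (2 ^ k * pi * \<theta>)\<bar>)"

definition G :: "nat \<Rightarrow> real \<Rightarrow> real" where
  "G k \<theta> = (\<Sum>j\<le>k. 2 ^ Suc j * pp j \<theta>)"

lemma pp_Suc: "pp (Suc j) \<theta> = \<bar>sin (pi * \<theta>)\<bar> * pp j (2*\<theta>)"
  unfolding pp_def prod.lessThan_Suc_shift by (simp add: mult_ac)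

lemma pp_nonneg: "pp j \<theta> \<ge> 0"
  unfolding pp_def by (simp add: prod_nonneg)

lemma G_Suc: "G (Suc k) \<theta> = 2 + 2 * \<bar>sin (pi * \<theta>)\<bar> * G k (2*\<theta>)"
  unfolding G_def sum.atMost_Suc_shift pp_Suc
  by (simp add: pp_def sum_distrib_left mult_ac)

lemma V_split: "a \<le> m \<Longrightarrow> m \<le> b \<Longrightarrow> V a b \<theta> = V a m \<theta> + V m b \<theta>"
  unfolding V_def by (simp add: sum.atLeastLessThan_concat)

lemma V_bound: "b \<le> a + 2^k \<Longrightarrow> norm (V a b \<theta>) \<le> G k \<theta>"
proof (induction k arbitrary: a b \<theta>)
  case 0
  then have "norm (V a b \<theta>) \<le> 1" using norm_V_le[of a b \<theta>] by simp
  then show ?case by (simp add: G_def pp_def)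
next
  case (Suc k)
  have Gk: "G k (2*\<theta>) \<ge> 0"
    unfolding G_def by (intro sum_nonneg mult_nonneg_nonneg pp_nonneg) auto
  have G2: "G (Suc k) \<theta> \<ge> 2" unfolding G_Suc
    using Gk by simp
  show ?case
  proof (cases "b \<le> a + 1")
    case True
    then have "norm (V a b \<theta>) \<le> 1" using norm_V_le[of a b \<theta>] by simp
    then show ?thesis using G2 by simp
  next
    case False
    define a0 where "a0 = (a+1) div 2"
    define b0 where "b0 = b div 2"
    have h1: "a \<le> 2*a0" "2*a0 \<le> a+1" "2*a0 \<le> 2*b0" "2*b0 \<le> b" "b \<le> 2*b0+1"
      using False unfolding a0_def b0_def by auto
    have hb: "b0 \<le> a0 + 2^k" using Suc.prems h1 by simp
    have "V a b \<theta> = V a (2*a0) \<theta> + (V (2*a0) (2*b0) \<theta> + V (2*b0) b \<theta>)"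
      using h1 by (metis V_split order_trans)
    also have "\<dots> = V a (2*a0) \<theta> + ((1 - e \<theta>) * V a0 b0 (2*\<theta>) + V (2*b0) b \<theta>)"
      by (simp add: V_double)
    finally have "norm (V a b \<theta>) \<le> norm (V a (2*a0) \<theta>) + norm ((1 - e \<theta>) * V a0 b0 (2*\<theta>) + V (2*b0) b \<theta>)"
      using norm_triangle_ineq by simp
    also have "\<dots> \<le> norm (V a (2*a0) \<theta>) + (norm ((1 - e \<theta>) * V a0 b0 (2*\<theta>)) + norm (V (2*b0) b \<theta>))"
      using norm_triangle_ineq by (rule add_left_mono)
    finally have "norm (V a b \<theta>) \<le> norm (V a (2*a0) \<theta>) + (norm (1 - e \<theta>) * norm (V a0 b0 (2*\<theta>)) + norm (V (2*b0) b \<theta>))"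
      by (simp add: norm_mult)
    moreover have "norm (V a (2*a0) \<theta>) \<le> 1" using norm_V_le[of a "2*a0" \<theta>] h1 by simp
    moreover have "norm (V (2*b0) b \<theta>) \<le> 1" using norm_V_le[of "2*b0" b \<theta>] h1 by simp
    moreover have "norm (1 - e \<theta>) * norm (V a0 b0 (2*\<theta>)) \<le> 2 * \<bar>sin (pi * \<theta>)\<bar> * G k (2*\<theta>)"
      unfolding norm_1_minus_e using Suc.IH[OF hb, of "2*\<theta>"]
      by (intro mult_left_mono) auto
    ultimately show ?thesis unfolding G_Suc by linarith
  qed
qed

lemma S_eq_V:
  assumes "x \<ge> 0" "z \<ge> 0"
  shows "S x z \<theta> = V (nat \<lfloor>x\<rfloor> + 1) (nat \<lfloor>x + z\<rfloor> + 1) \<theta>"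
proof -
  have "{m::nat. x < real m \<and> real m \<le> x + z} = {nat \<lfloor>x\<rfloor> + 1..<nat \<lfloor>x + z\<rfloor> + 1}"
  proof (intro set_eqI iffI)
    fix m assume "m \<in> {m::nat. x < real m \<and> real m \<le> x + z}"
    then have "x < real m" "real m \<le> x + z" by auto
    then have "\<lfloor>x\<rfloor> < int m" "int m \<le> \<lfloor>x + z\<rfloor>"
      by (simp_all add: floor_less_iff le_floor_iff)
    moreover have "\<lfloor>x\<rfloor> \<ge> 0" using assms by simp
    ultimately have "nat \<lfloor>x\<rfloor> < m" "m \<le> nat \<lfloor>x + z\<rfloor>"
      by (simp_all add: nat_less_iff le_nat_iff)
    then show "m \<in> {nat \<lfloor>x\<rfloor> + 1..<nat \<lfloor>x + z\<rfloor> + 1}" by auto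
  next
    fix m assume "m \<in> {nat \<lfloor>x\<rfloor> + 1..<nat \<lfloor>x + z\<rfloor> + 1}"
    then have "\<lfloor>x\<rfloor> < int m" "int m \<le> \<lfloor>x + z\<rfloor>" using assms by auto
    then have "x < real m" "real m \<le> x + z"
      by (simp_all add: floor_less_iff le_floor_iff)
    then show "m \<in> {m::nat. x < real m \<and> real m \<le> x + z}" by auto
  qed
  then show ?thesis unfolding S_def V_def by simp
qed

lemma S_bound:
  assumes "x \<ge> 0" "z \<ge> 1" "2 * z \<le> 2 ^ k"
  shows "cmod (S x z \<theta>) \<le> G k \<theta>"
proof -
  have "real_of_int \<lfloor>x + z\<rfloor> \<le> x + z" by simp
  moreover have "x < real_of_int \<lfloor>x\<rfloor> + 1" by linarith
  ultimately have "real_of_int \<lfloor>x + z\<rfloor> < real_of_int \<lfloor>x\<rfloor> + 2^k"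
    using assms by linarith
  then have "real_of_int \<lfloor>x + z\<rfloor> < real_of_int (\<lfloor>x\<rfloor> + 2^k)" by simp
  then have "\<lfloor>x + z\<rfloor> < \<lfloor>x\<rfloor> + 2^k" by (simp only: of_int_less_iff)
  moreover have "\<lfloor>x\<rfloor> \<ge> 0" "\<lfloor>x + z\<rfloor> \<ge> 0" using assms by auto
  ultimately have "nat \<lfloor>x + z\<rfloor> \<le> nat (\<lfloor>x\<rfloor> + int (2^k))" by (intro nat_mono) simp
  also have "\<dots> = nat \<lfloor>x\<rfloor> + 2^k" using \<open>\<lfloor>x\<rfloor> \<ge> 0\<close> by (simp add: nat_add_distrib)
  finally have "nat \<lfloor>x + z\<rfloor> + 1 \<le> nat \<lfloor>x\<rfloor> + 1 + 2^k" by simp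
  then show ?thesis using S_eq_V[of x z \<theta>] assms V_bound by simp
qed

lemma continuous_V: "continuous_on A (V a b)"
  unfolding V_def e_def by (intro continuous_intros)

lemma continuous_pp: "continuous_on A (pp j)"
  unfolding pp_def by (intro continuous_intros)

lemma continuous_G: "continuous_on A (G k)"
  unfolding G_def by (intro continuous_intros continuous_pp)

lemma G_nonneg: "G k \<theta> \<ge> 0"
  unfolding G_def by (intro sum_nonneg mult_nonneg_nonneg pp_nonneg) auto

lemma integral_G: "integral {0..1} (G k) = (\<Sum>j\<le>k. 2 ^ Suc j * P j)"
proof -
  have "integral {0..1} (G k) = (\<Sum>j\<le>k. integral {0..1} (\<lambda>\<theta>. 2 ^ Suc j * pp j \<theta>))"
    unfolding G_def
    by (rule integral_sum) (auto intro!: integrable_continuous_real continuous_intros continuous_pp)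
  also have "\<dots> = (\<Sum>j\<le>k. 2 ^ Suc j * P j)"
    unfolding P_def pp_def by simp
  finally show ?thesis .
qed

lemma F_props:
  assumes z: "z \<ge> 1" and k: "2 * z \<le> 2 ^ k"
  shows "(\<lambda>\<theta>. SUP x\<in>{0::real..}. cmod (S x z \<theta>)) integrable_on {0..1}"
    and "integral {0..1} (\<lambda>\<theta>. SUP x\<in>{0::real..}. cmod (S x z \<theta>)) \<le> integral {0..1} (G k)"
proof -
  define F where "F = (\<lambda>\<theta>. SUP x\<in>{0::real..}. cmod (S x z \<theta>))"
  have Sb: "\<And>x \<theta>. x \<in> {0::real..} \<Longrightarrow> cmod (S x z \<theta>) \<le> G k \<theta>"
    using S_bound z k by simp
  have bdd: "bdd_above ((\<lambda>x. cmod (S x z \<theta>)) ` {0::real..})" for \<theta>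
    using Sb by (intro bdd_aboveI2) auto
  have FleG: "F \<theta> \<le> G k \<theta>" for \<theta>
    unfolding F_def using Sb by (intro cSUP_least) auto
  have Fge0: "0 \<le> F \<theta>" for \<theta>
  proof -
    have "cmod (S 0 z \<theta>) \<le> F \<theta>" unfolding F_def using bdd by (intro cSUP_upper) auto
    then show ?thesis using norm_ge_zero order_trans by blast
  qed
  define h where "h = (\<lambda>x::real. (nat \<lfloor>x\<rfloor> + 1, nat \<lfloor>x + z\<rfloor> + 1))"
  define I where "I = h ` {0..}"
  have Feq: "F = (\<lambda>\<theta>. SUP i\<in>I. cmod (V (fst i) (snd i) \<theta>))"
  proof
    fix \<theta>
    have "(\<lambda>x. cmod (S x z \<theta>)) ` {0::real..} = (\<lambda>i. cmod (V (fst i) (snd i) \<theta>)) ` I"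
      unfolding I_def image_image h_def using S_eq_V z
      by (intro image_cong) auto
    then show "F \<theta> = (SUP i\<in>I. cmod (V (fst i) (snd i) \<theta>))" unfolding F_def by simp
  qed
  have meas: "F \<in> borel_measurable (lebesgue_on {0..1})"
    unfolding Feq
  proof (rule borel_measurable_cSUP)
    show "countable I" by simp
    show "(\<lambda>\<theta>. cmod (V (fst i) (snd i) \<theta>)) \<in> borel_measurable (lebesgue_on {0..1})" for i
      by (intro continuous_imp_measurable_on_sets_lebesgue continuous_intros continuous_V) auto
    show "bdd_above ((\<lambda>i. cmod (V (fst i) (snd i) \<theta>)) ` I)" for \<theta>
    proof (rule bdd_aboveI2)
      fix i assume "i \<in> I"
      then obtain x where x: "x \<in> {0::real..}" "i = h x" unfolding I_def by auto
      then have "cmod (V (fst i) (snd i) \<theta>) = cmod (S x z \<theta>)"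
        using S_eq_V z by (simp add: h_def)
      then show "cmod (V (fst i) (snd i) \<theta>) \<le> G k \<theta>" using Sb x by simp
    qed
  qed
  have intG: "G k integrable_on {0..1}"
    by (intro integrable_continuous_real continuous_G)
  have intF: "F integrable_on {0..1}"
    by (rule measurable_bounded_by_integrable_imp_integrable[OF meas intG])
       (use FleG Fge0 in auto)
  then show "(\<lambda>\<theta>. SUP x\<in>{0::real..}. cmod (S x z \<theta>)) integrable_on {0..1}"
    unfolding F_def .
  show "integral {0..1} (\<lambda>\<theta>. SUP x\<in>{0::real..}. cmod (S x z \<theta>)) \<le> integral {0..1} (G k)"
    using integral_le[OF intF intG FleG] unfolding F_def .
qed

theorem proposition2:
  fixes \<rho> :: real
  assumes "0.6543 < \<rho>" and "\<rho> < 0.6632"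
    and "\<exists>c1 c2. 0 < c1 \<and> 0 < c2 \<and>
           (\<forall>l::nat. c1 * \<rho> ^ l \<le> P l \<and> P l \<le> c2 * \<rho> ^ l)"
  shows "\<exists>C. \<forall>z::real. z \<ge> 1 \<longrightarrow>
           (\<lambda>\<theta>. SUP x\<in>{0::real..}. cmod (S x z \<theta>)) integrable_on {0..1} \<and>
           integral {0..1} (\<lambda>\<theta>. SUP x\<in>{0::real..}. cmod (S x z \<theta>))
             \<le> C * z powr (1 + ln \<rho> / ln 2)"
proof -
  obtain c2 where c2: "c2 > 0" "\<And>l. P l \<le> c2 * \<rho> ^ l" using assms(3) by blast
  define \<alpha> where "\<alpha> = 1 + ln \<rho> / ln 2"
  have rho: "\<rho> > 1/2" "\<rho> > 0" using assms(1) by auto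
  have ln2: "ln (2::real) > 0" by simp
  have "ln \<rho> > ln (1/2)" using rho by simp
  then have "ln \<rho> > - ln 2" by (simp add: ln_div)
  then have "ln \<rho> / ln 2 > -1" using ln2 by (simp add: field_simps)
  then have alpha: "\<alpha> \<ge> 0" unfolding \<alpha>_def by simp
  define r where "r = 2 * \<rho>"
  have r1: "r > 1" unfolding r_def using rho by simp
  define K where "K = 2 * c2 * r / (r - 1)"
  have K: "K > 0" unfolding K_def using r1 c2 by simp
  show ?thesis
  proof (intro exI allI impI conjI)
    fix z :: real assume z: "z \<ge> 1"
    obtain k0 where "2 * z < 2 ^ k0" using real_arch_pow[of 2 "2*z"] by auto
    then have "\<exists>k. 2 * z \<le> 2 ^ k" by (auto intro: less_imp_le)
    then obtain k where k: "2 * z \<le> 2 ^ k" and kmin: "\<And>m. m < k \<Longrightarrow> \<not> 2 * z \<le> 2 ^ m"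
      using exists_least_iff[of "\<lambda>k. 2 * z \<le> (2::real) ^ k"] by blast
    have "k \<noteq> 0" using k z kmin[of 0] by (cases k) auto
    then obtain k1 where k1: "k = Suc k1" by (cases k) auto
    have "2 ^ k1 < 2 * z" using kmin[of k1] k1 by auto
    then have k4: "(2::real) ^ k \<le> 4 * z" unfolding k1 by simp
    show "(\<lambda>\<theta>. SUP x\<in>{0::real..}. cmod (S x z \<theta>)) integrable_on {0..1}"
      using F_props(1)[OF z k] .
    have "integral {0..1} (\<lambda>\<theta>. SUP x\<in>{0::real..}. cmod (S x z \<theta>)) \<le> integral {0..1} (G k)"
      using F_props(2)[OF z k] .
    also have "\<dots> = (\<Sum>j\<le>k. 2 ^ Suc j * P j)" by (rule integral_G)
    also have "\<dots> \<le> (\<Sum>j\<le>k. 2 ^ Suc j * (c2 * \<rho> ^ j))"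
      using c2 by (intro sum_mono mult_left_mono) auto
    also have "\<dots> = 2 * c2 * (\<Sum>j<Suc k. r ^ j)"
      unfolding r_def by (simp add: sum_distrib_left lessThan_Suc_atMost power_mult_distrib mult_ac)
    also have "\<dots> = 2 * c2 * ((r ^ Suc k - 1) / (r - 1))"
      using r1 by (subst geometric_sum) auto
    also have "\<dots> \<le> 2 * c2 * (r ^ Suc k / (r - 1))"
      using r1 c2 by (intro mult_left_mono divide_right_mono) auto
    also have "\<dots> = K * r ^ k" unfolding K_def by (simp add: field_simps)
    also have "r ^ k = (2 ^ k) powr \<alpha>"
    proof -
      have "ln (r ^ k) = ln ((2 ^ k) powr \<alpha>)"
        unfolding ln_powr ln_realpow \<alpha>_def r_def using rho ln2
        by (simp add: ln_mult field_simps)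
      moreover have "r ^ k > 0" "(2 ^ k) powr \<alpha> > (0::real)" using r1 by auto
      ultimately show ?thesis using ln_inj_iff by blast
    qed
    also have "K * (2 ^ k) powr \<alpha> \<le> K * (4 * z) powr \<alpha>"
      using K alpha k4 by (intro mult_left_mono powr_mono2) auto
    also have "\<dots> = (K * 4 powr \<alpha>) * z powr \<alpha>"
      using z by (simp add: powr_mult)
    finally show "integral {0..1} (\<lambda>\<theta>. SUP x\<in>{0::real..}. cmod (S x z \<theta>))
        \<le> (K * 4 powr \<alpha>) * z powr (1 + ln \<rho> / ln 2)" unfolding \<alpha>_def .
  qed
qed

end
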